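(* Let $\alpha$ be a graph function on a strongly connected digraph $G$, and let $r,s$ be raising vectors obtained from $\alpha$ via two (possibly different) finite sequences of raising operations. Suppose $r\le s$ coordinatewise, and let $r',s'$ be the raising vectors obtained from $r,s$ respectively after one additional raising operation at a common vertex $v$. Then $r'\le s'$.
   Context: $G$ is a strongly connected directed graph (self-loops allowed); a graph function assigns a real weight $\alpha_{uv}$ to each edge. For a graph function $\beta$, $\beta_v^{\text{in}}=\max_{u:(u,v)\in G}\beta_{uv}$, $\beta_v^{\text{out}}=\max_{w:(v,w)\in G}\beta_{vw}$, $\rho^R_v=\max\{0,\beta_v^{\text{out}}-\beta_v^{\text{in}}\}$. A raising operation at $v$: if $\rho^R_v>0$, add $\rho^R_v/2$ to each $\beta_{uv}$ ($u\ne v$) and subtract it from each $\beta_{vw}$ ($w\ne v$); otherwise do nothing. The raising vector of a sequence of raising operations starting at $\alpha$ starts at $0$ and, at each operation at vertex $v$, increases its $v$-coordinate by the current $\rho^R_v/2$; the current graph function is then $\beta_{uv}=\alpha_{uv}+r_v-r_u$ where $r$ is the current raising vector. *)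

theory Defs
  imports Complex_Main
begin

definition strongly_connected :: "'a set \<Rightarrow> ('a \<times> 'a) set \<Rightarrow> bool" where
  "strongly_connected V E \<longleftrightarrow> finite V \<and> V \<noteq> {} \<and> E \<subseteq> V \<times> V \<and>
     (\<forall>u\<in>V. \<forall>w\<in>V. (u, w) \<in> E\<^sup>*)"

definition cur :: "('a \<Rightarrow> 'a \<Rightarrow> real) \<Rightarrow> ('a \<Rightarrow> real) \<Rightarrow> 'a \<Rightarrow> 'a \<Rightarrow> real" where
  "cur \<alpha> r u w = \<alpha> u w + r w - r u"

definition beta_in :: "('a \<times> 'a) set \<Rightarrow> ('a \<Rightarrow> 'a \<Rightarrow> real) \<Rightarrow> 'a \<Rightarrow> real" where
  "beta_in E \<beta> v = Max {\<beta> u v | u. (u, v) \<in> E}"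

definition beta_out :: "('a \<times> 'a) set \<Rightarrow> ('a \<Rightarrow> 'a \<Rightarrow> real) \<Rightarrow> 'a \<Rightarrow> real" where
  "beta_out E \<beta> v = Max {\<beta> v w | w. (v, w) \<in> E}"

definition rhoR :: "('a \<times> 'a) set \<Rightarrow> ('a \<Rightarrow> 'a \<Rightarrow> real) \<Rightarrow> 'a \<Rightarrow> real" where
  "rhoR E \<beta> v = max 0 (beta_out E \<beta> v - beta_in E \<beta> v)"

definition raise :: "('a \<times> 'a) set \<Rightarrow> ('a \<Rightarrow> 'a \<Rightarrow> real) \<Rightarrow> ('a \<Rightarrow> real) \<Rightarrow> 'a \<Rightarrow> ('a \<Rightarrow> real)" where
  "raise E \<alpha> r v = r(v := r v + rhoR E (cur \<alpha> r) v / 2)"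

inductive raising_vector :: "'a set \<Rightarrow> ('a \<times> 'a) set \<Rightarrow> ('a \<Rightarrow> 'a \<Rightarrow> real) \<Rightarrow> ('a \<Rightarrow> real) \<Rightarrow> bool"
  for V E \<alpha> where
  init: "raising_vector V E \<alpha> (\<lambda>_. 0)"
| step: "raising_vector V E \<alpha> r \<Longrightarrow> v \<in> V \<Longrightarrow> raising_vector V E \<alpha> (raise E \<alpha> r v)"

end

theory Submission
  imports Defs
begin

lemma fin_out: "finite E \<Longrightarrow> finite {f w | w. (v, w) \<in> E}"
proof -
  assume "finite E"
  have "{f w | w. (v, w) \<in> E} \<subseteq> (\<lambda>p. f (snd p)) ` E" by force
  thus ?thesis using \<open>finite E\<close> finite_subset by blast
qed

lemma fin_in: "finite E \<Longrightarrow> finite {f u | u. (u, v) \<in> E}"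
proof -
  assume "finite E"
  have "{f u | u. (u, v) \<in> E} \<subseteq> (\<lambda>p. f (fst p)) ` E" by force
  thus ?thesis using \<open>finite E\<close> finite_subset by blast
qed

lemma arith_aux:
  fixes a b o1 o2 i1 i2 :: real
  assumes "o1 + a \<le> o2 + b" "i2 - b \<le> i1 - a" "a \<le> b"
  shows "a + max 0 (o1 - i1) / 2 \<le> b + max 0 (o2 - i2) / 2"
  using assms by (simp add: max_def field_simps)

theorem lemma2:
  fixes V :: "'a set" and E :: "('a \<times> 'a) set" and \<alpha> :: "'a \<Rightarrow> 'a \<Rightarrow> real"
    and r s :: "'a \<Rightarrow> real" and v :: 'a
  assumes "strongly_connected V E"
    and "raising_vector V E \<alpha> r"
    and "raising_vector V E \<alpha> s"
    and "\<forall>x\<in>V. r x \<le> s x"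
    and "v \<in> V"
  shows "\<forall>x\<in>V. raise E \<alpha> r v x \<le> raise E \<alpha> s v x"
proof -
  have fV: "finite V" and EV: "E \<subseteq> V \<times> V" and reach: "\<forall>u\<in>V. \<forall>w\<in>V. (u, w) \<in> E\<^sup>*"
    using assms(1) unfolding strongly_connected_def by auto
  have fE: "finite E" using fV EV finite_subset by blast
  have le: "r x \<le> s x" if "x \<in> V" for x using assms(4) that by blast
  have main: "r v + rhoR E (cur \<alpha> r) v / 2 \<le> s v + rhoR E (cur \<alpha> s) v / 2"
  proof (cases "\<exists>w. (v, w) \<in> E")
    case False
    have nin: "\<not> (\<exists>u. (u, v) \<in> E)"
    proof
      assume "\<exists>u. (u, v) \<in> E"
      then obtain u where u: "(u, v) \<in> E" by blast
      hence "u \<in> V" using EV by blast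
      hence "(v, u) \<in> E\<^sup>*" using reach assms(5) by blast
      hence "v = u" using False by (metis converse_rtranclE)
      thus False using u False by blast
    qed
    have "rhoR E (cur \<alpha> r) v = rhoR E (cur \<alpha> s) v"
      unfolding rhoR_def beta_in_def beta_out_def using False nin by simp
    thus ?thesis using le assms(5) by simp
  next
    case True
    then obtain w0 where w0: "(v, w0) \<in> E" by blast
    have u0: "\<exists>u. (u, v) \<in> E"
    proof -
      have "w0 \<in> V" using w0 EV by blast
      hence "(w0, v) \<in> E\<^sup>*" using reach assms(5) by blast
      thus ?thesis using w0 by (metis rtranclE)
    qed
    then obtain u0 where u0: "(u0, v) \<in> E" by blast
    define Or where "Or = {cur \<alpha> r v w | w. (v, w) \<in> E}"
    define Os where "Os = {cur \<alpha> s v w | w. (v, w) \<in> E}"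
    define Ir where "Ir = {cur \<alpha> r u v | u. (u, v) \<in> E}"
    define Is where "Is = {cur \<alpha> s u v | u. (u, v) \<in> E}"
    have fOr: "finite Or" unfolding Or_def using fin_out[OF fE, of "\<lambda>w. cur \<alpha> r v w"] by simp
    have fOs: "finite Os" unfolding Os_def using fin_out[OF fE, of "\<lambda>w. cur \<alpha> s v w"] by simp
    have fIr: "finite Ir" unfolding Ir_def using fin_in[OF fE, of "\<lambda>u. cur \<alpha> r u v"] by simp
    have fIs: "finite Is" unfolding Is_def using fin_in[OF fE, of "\<lambda>u. cur \<alpha> s u v"] by simp
    have nOr: "Or \<noteq> {}" and nOs: "Os \<noteq> {}" unfolding Or_def Os_def using w0 by auto
    have nIr: "Ir \<noteq> {}" and nIs: "Is \<noteq> {}" unfolding Ir_def Is_def using u0 by auto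
    have h1: "Max Or + r v \<le> Max Os + s v"
    proof -
      have "Max Or \<in> Or" using Max_in fOr nOr by blast
      then obtain w where w: "(v, w) \<in> E" "Max Or = cur \<alpha> r v w" unfolding Or_def by blast
      have "w \<in> V" using w EV by blast
      have "cur \<alpha> s v w \<in> Os" unfolding Os_def using w by blast
      hence "cur \<alpha> s v w \<le> Max Os" using Max_ge fOs by blast
      thus ?thesis using w le[OF \<open>w \<in> V\<close>] unfolding cur_def by simp
    qed
    have h2: "Max Is - s v \<le> Max Ir - r v"
    proof -
      have "Max Is \<in> Is" using Max_in fIs nIs by blast
      then obtain u where u: "(u, v) \<in> E" "Max Is = cur \<alpha> s u v" unfolding Is_def by blast
      have "u \<in> V" using u EV by blast
      have "cur \<alpha> r u v \<in> Ir" unfolding Ir_def using u by blast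
      hence "cur \<alpha> r u v \<le> Max Ir" using Max_ge fIr by blast
      thus ?thesis using u le[OF \<open>u \<in> V\<close>] unfolding cur_def by simp
    qed
    have rr: "rhoR E (cur \<alpha> r) v = max 0 (Max Or - Max Ir)"
      unfolding rhoR_def beta_in_def beta_out_def Or_def Ir_def by simp
    have ss: "rhoR E (cur \<alpha> s) v = max 0 (Max Os - Max Is)"
      unfolding rhoR_def beta_in_def beta_out_def Os_def Is_def by simp
    show ?thesis unfolding rr ss by (rule arith_aux[OF h1 h2 le[OF assms(5)]])
  qed
  show ?thesis
  proof
    fix x assume "x \<in> V"
    show "raise E \<alpha> r v x \<le> raise E \<alpha> s v x"
      unfolding raise_def using main le[OF \<open>x \<in> V\<close>] by simp
  qed
qed

end
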